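(* Proper interval graphs $\subsetneq$ exactly hittable interval graphs $\subsetneq$ interval graphs (both containments are strict).
   Context: An interval graph is the intersection graph of a finite family of intervals on a line. A proper interval graph is an interval graph having an interval representation in which no interval properly contains another. An interval hypergraph has vertex set $[n]$ and hyperedges that are nonempty sets of consecutive integers; it is exactly hittable if there is a set $T$ of points with $|T\cap I|=1$ for every hyperedge $I$. An exactly hittable interval graph is an interval graph that is the intersection graph of an exactly hittable interval hypergraph. *)

theory Defs
  imports Complex_Main
begin

definition simple_graph :: "'a set \<Rightarrow> 'a set set \<Rightarrow> bool" where
  "simple_graph V E \<longleftrightarrow> finite V \<and>
     (\<forall>e\<in>E. \<exists>u v. u \<in> V \<and> v \<in> V \<and> u \<noteq> v \<and> e = {u, v})"

definition is_intersection_graph :: "'a set \<Rightarrow> 'a set set \<Rightarrow> ('a \<Rightarrow> 'b set) \<Rightarrow> bool" where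
  "is_intersection_graph V E I \<longleftrightarrow>
     (\<forall>u\<in>V. \<forall>v\<in>V. u \<noteq> v \<longrightarrow> ({u, v} \<in> E \<longleftrightarrow> I u \<inter> I v \<noteq> {}))"

definition interval_graph :: "'a set \<Rightarrow> 'a set set \<Rightarrow> bool" where
  "interval_graph V E \<longleftrightarrow> simple_graph V E \<and>
     (\<exists>l r :: 'a \<Rightarrow> real. (\<forall>v\<in>V. l v \<le> r v) \<and>
        is_intersection_graph V E (\<lambda>v. {l v..r v}))"

definition proper_interval_graph :: "'a set \<Rightarrow> 'a set set \<Rightarrow> bool" where
  "proper_interval_graph V E \<longleftrightarrow> simple_graph V E \<and>
     (\<exists>l r :: 'a \<Rightarrow> real. (\<forall>v\<in>V. l v \<le> r v) \<and>
        is_intersection_graph V E (\<lambda>v. {l v..r v}) \<and>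
        (\<forall>u\<in>V. \<forall>v\<in>V. \<not> ({l u..r u} \<subset> {l v..r v})))"

definition interval_hypergraph :: "nat \<Rightarrow> 'a set \<Rightarrow> ('a \<Rightarrow> nat set) \<Rightarrow> bool" where
  "interval_hypergraph n V I \<longleftrightarrow>
     (\<forall>v\<in>V. \<exists>a b. 1 \<le> a \<and> a \<le> b \<and> b \<le> n \<and> I v = {a..b})"

definition exactly_hittable :: "nat \<Rightarrow> 'a set \<Rightarrow> ('a \<Rightarrow> nat set) \<Rightarrow> bool" where
  "exactly_hittable n V I \<longleftrightarrow>
     (\<exists>T. T \<subseteq> {1..n} \<and> (\<forall>v\<in>V. card (T \<inter> I v) = 1))"

definition exactly_hittable_interval_graph :: "'a set \<Rightarrow> 'a set set \<Rightarrow> bool" where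
  "exactly_hittable_interval_graph V E \<longleftrightarrow> interval_graph V E \<and>
     (\<exists>n I. interval_hypergraph n V I \<and> exactly_hittable n V I \<and>
        is_intersection_graph V E I)"

end

theory Submission
  imports Defs
begin

lemma ivl_disj: fixes a b c d :: "'a::linorder"
  assumes "a \<le> b" "c \<le> d"
  shows "{a..b} \<inter> {c..d} = {} \<longleftrightarrow> b < c \<or> d < a"
  using assms by (auto simp: Int_atLeastAtMost max_def min_def not_le)

lemma rank_mono: fixes S :: "real set" assumes "finite S" "x\<in>S" "y\<in>S"
  shows "card {z\<in>S. z \<le> x} \<le> card {z\<in>S. z \<le> y} \<longleftrightarrow> x \<le> y"
proof
  assume "x \<le> y" then show "card {z\<in>S. z \<le> x} \<le> card {z\<in>S. z \<le> y}"
    by (intro card_mono) (auto simp: assms)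
next
  assume h: "card {z\<in>S. z \<le> x} \<le> card {z\<in>S. z \<le> y}" show "x \<le> y"
  proof (rule ccontr)
    assume "\<not> x \<le> y" then have "{z\<in>S. z \<le> y} \<subset> {z\<in>S. z \<le> x}" using assms by auto
    then have "card {z\<in>S. z \<le> y} < card {z\<in>S. z \<le> x}" using assms by (intro psubset_card_mono) auto
    with h show False by simp
  qed
qed

lemma hit:
  fixes l r :: "'a \<Rightarrow> real"
  assumes "finite V" "\<forall>v\<in>V. l v \<le> r v" "\<forall>u\<in>V. \<forall>v\<in>V. \<not> {l u..r u} \<subset> {l v..r v}"
  shows "\<exists>T \<subseteq> r`V. \<forall>v\<in>V. card (T \<inter> {l v..r v}) = 1"
  using assms
proof (induction V rule: finite_psubset_induct)
  case (psubset V)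
  show ?case
  proof (cases "V = {}")
    case True then show ?thesis by auto
  next
    case False
    define p where "p = Min (r`V)"
    have pin: "p \<in> r`V" using False psubset.hyps unfolding p_def by (intro Min_in) auto
    have pmin: "\<forall>v\<in>V. p \<le> r v" using psubset.hyps unfolding p_def by auto
    define V2 where "V2 = {v\<in>V. p < l v}"
    from pin obtain w where w: "w\<in>V" "p = r w" by auto
    have "w \<notin> V2" using w psubset.prems(1) unfolding V2_def by auto
    hence sub: "V2 \<subset> V" using w unfolding V2_def by auto
    have p1: "\<forall>v\<in>V2. l v \<le> r v" using psubset.prems(1) V2_def by auto
    have p2: "\<forall>u\<in>V2. \<forall>v\<in>V2. \<not> {l u..r u} \<subset> {l v..r v}" using psubset.prems(2) V2_def by auto
    obtain T2 where T2: "T2 \<subseteq> r`V2" "\<forall>v\<in>V2. card (T2 \<inter> {l v..r v}) = 1"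
      using psubset.IH[OF sub p1 p2] by blast
    define T where "T = insert p T2"
    have "T \<subseteq> r`V" using pin T2(1) sub unfolding T_def by auto
    moreover have "\<forall>v\<in>V. card (T \<inter> {l v..r v}) = 1"
    proof
      fix v assume v: "v \<in> V"
      show "card (T \<inter> {l v..r v}) = 1"
      proof (cases "p < l v")
        case True
        then have "v \<in> V2" using v unfolding V2_def by auto
        moreover have "T \<inter> {l v..r v} = T2 \<inter> {l v..r v}" using True unfolding T_def by auto
        ultimately show ?thesis using T2(2) by simp
      next
        case False
        have "T2 \<inter> {l v..r v} = {}"
        proof (rule ccontr)
          assume "T2 \<inter> {l v..r v} \<noteq> {}"
          then obtain t where t: "t \<in> T2" "t \<in> {l v..r v}" by blast
          then obtain u where u: "u \<in> V2" "t = r u" using T2(1) by auto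
          have ru: "r u \<le> r v" using t u by auto
          have lu: "l v < l u" using u False unfolding V2_def by auto
          have lr: "l u \<le> r u" using u psubset.prems(1) unfolding V2_def by auto
          have s1: "{l u..r u} \<subseteq> {l v..r v}" using ru lu by auto
          have "l v \<notin> {l u..r u}" using lu by auto
          moreover have "l v \<in> {l v..r v}" using v psubset.prems(1) by auto
          ultimately have "{l u..r u} \<subset> {l v..r v}" using s1 by blast
          then show False using psubset.prems(2) u v V2_def by auto
        qed
        moreover have "p \<in> {l v..r v}" using False pmin v by auto
        ultimately have "T \<inter> {l v..r v} = {p}" unfolding T_def by auto
        then show ?thesis by simp
      qed
    qed
    ultimately show ?thesis by blast
  qed
qed

lemma part1:
  assumes "proper_interval_graph V E" shows "exactly_hittable_interval_graph V E"
proof -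
  from assms obtain l r :: "'a\<Rightarrow>real" where sg: "simple_graph V E" and lr: "\<forall>v\<in>V. l v \<le> r v"
    and ig: "is_intersection_graph V E (\<lambda>v. {l v..r v})"
    and pr: "\<forall>u\<in>V. \<forall>v\<in>V. \<not> {l u..r u} \<subset> {l v..r v}"
    unfolding proper_interval_graph_def by blast
  have fin: "finite V" using sg simple_graph_def by auto
  obtain T where T: "T \<subseteq> r`V" "\<forall>v\<in>V. card (T \<inter> {l v..r v}) = 1" using hit[OF fin lr pr] by blast
  define S where "S = l`V \<union> r`V"
  have finS: "finite S" using fin S_def by auto
  define f where "f x = card {z\<in>S. z \<le> x}" for x
  have mono: "f x \<le> f y \<longleftrightarrow> x \<le> y" if "x\<in>S" "y\<in>S" for x y
    using rank_mono[OF finS that] f_def by simp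
  have smono: "f x < f y \<longleftrightarrow> x < y" if "x\<in>S" "y\<in>S" for x y
    using mono[OF that(2) that(1)] by (meson not_le)
  have bnd: "1 \<le> f x \<and> f x \<le> card S" if "x \<in> S" for x
  proof
    have "{z\<in>S. z \<le> x} \<noteq> {}" using that by auto
    moreover have "finite {z\<in>S. z \<le> x}" using finS by auto
    ultimately show "1 \<le> f x" unfolding f_def by (simp add: Suc_le_eq card_gt_0_iff)
    show "f x \<le> card S" unfolding f_def using finS by (intro card_mono) auto
  qed
  define n where "n = card S"
  define I where "I v = {f (l v)..f (r v)}" for v
  have ih: "interval_hypergraph n V I" unfolding interval_hypergraph_def
  proof
    fix v assume v: "v \<in> V"
    have lS: "l v \<in> S" and rS: "r v \<in> S" using v S_def by auto
    show "\<exists>a b. 1 \<le> a \<and> a \<le> b \<and> b \<le> n \<and> I v = {a..b}"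
      by (rule exI[of _ "f (l v)"], rule exI[of _ "f (r v)"])
         (use bnd[OF lS] bnd[OF rS] mono[OF lS rS] lr v in \<open>auto simp: n_def I_def\<close>)
  qed
  have TS: "T \<subseteq> S" using T(1) S_def by auto
  have injf: "inj_on f S" by (intro inj_onI) (metis mono order.antisym order_refl)
  have eh: "exactly_hittable n V I"
    unfolding exactly_hittable_def
  proof (intro exI[of _ "f`T"] conjI ballI)
    show "f`T \<subseteq> {1..n}" using bnd TS n_def by auto
    fix v assume v: "v\<in>V"
    have lS: "l v \<in> S" and rS: "r v \<in> S" using v S_def by auto
    have "f`T \<inter> I v = f`(T \<inter> {l v..r v})"
    proof
      show "f`T \<inter> I v \<subseteq> f`(T \<inter> {l v..r v})"
      proof
        fix y assume "y \<in> f`T \<inter> I v"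
        then obtain t where "t \<in> T" "y = f t" "f (l v) \<le> f t" "f t \<le> f (r v)" by (auto simp: I_def)
        then show "y \<in> f`(T \<inter> {l v..r v})" using mono lS rS TS by auto
      qed
      show "f`(T \<inter> {l v..r v}) \<subseteq> f`T \<inter> I v"
        using mono lS rS TS by (auto simp: I_def)
    qed
    moreover have "card (f`(T \<inter> {l v..r v})) = card (T \<inter> {l v..r v})"
      using injf TS by (intro card_image) (auto intro: inj_on_subset)
    ultimately show "card (f`T \<inter> I v) = 1" using T(2) v by simp
  qed
  have "is_intersection_graph V E I"
    unfolding is_intersection_graph_def
  proof (intro ballI impI)
    fix u v assume u: "u\<in>V" and v: "v\<in>V" and "u\<noteq>v"
    have S4: "l u \<in> S" "r u \<in> S" "l v \<in> S" "r v \<in> S" using u v S_def by auto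
    have "{u,v}\<in>E \<longleftrightarrow> {l u..r u} \<inter> {l v..r v} \<noteq> {}"
      using ig u v \<open>u\<noteq>v\<close> unfolding is_intersection_graph_def by auto
    also have "\<dots> \<longleftrightarrow> \<not> (r u < l v \<or> r v < l u)" using ivl_disj lr u v by auto
    also have "\<dots> \<longleftrightarrow> \<not> (f(r u) < f(l v) \<or> f(r v) < f(l u))" using smono S4 by auto
    also have "\<dots> \<longleftrightarrow> I u \<inter> I v \<noteq> {}" unfolding I_def
      using ivl_disj[of "f(l u)" "f(r u)" "f(l v)" "f(r v)"] mono S4 lr u v by auto
    finally show "{u,v}\<in>E \<longleftrightarrow> I u \<inter> I v \<noteq> {}" .
  qed
  moreover have "interval_graph V E" using sg lr ig unfolding interval_graph_def by blast
  ultimately show ?thesis unfolding exactly_hittable_interval_graph_def using ih eh by blast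
qed


lemma sg_intro: "finite V \<Longrightarrow> (\<forall>e\<in>E. \<exists>u\<in>V. \<exists>v\<in>V. u\<noteq>v \<and> e={u,v}) \<Longrightarrow> simple_graph V E"
  unfolding simple_graph_def by blast

lemma mid: fixes a b :: "'i \<Rightarrow> 'b::linorder"
 assumes N: "a x \<le> b x" "a y \<le> b y" "a z \<le> b z"
 and D: "b x < a y \<or> b y < a x" "b x < a z \<or> b z < a x" "b y < a z \<or> b z < a y"
 and M: "a x \<le> b c" "a c \<le> b x" "a y \<le> b c" "a c \<le> b y" "a z \<le> b c" "a c \<le> b z"
 shows "\<exists>w\<in>{x,y,z}. a c \<le> a w \<and> b w \<le> b c"
proof (rule ccontr)
  assume "\<not> ?thesis"
  hence O: "a x < a c \<or> b c < b x" "a y < a c \<or> b c < b y" "a z < a c \<or> b c < b z" by (auto simp: not_le)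
  show False using O D M N by (meson le_less_trans less_le_trans less_trans not_le)
qed

lemma two_in: assumes "card (T \<inter> A) = 1" "card (T \<inter> B) = 1" "A \<inter> B = {}" "A \<subseteq> C" "B \<subseteq> C" "finite C"
  shows "card (T \<inter> C) \<noteq> 1"
proof -
  obtain s where s: "T \<inter> A = {s}" using assms(1) card_1_singletonE by blast
  obtain t where t: "T \<inter> B = {t}" using assms(2) card_1_singletonE by blast
  have "s \<noteq> t" using s t assms(3) by auto
  moreover have "{s,t} \<subseteq> T \<inter> C" using s t assms(4,5) by auto
  ultimately have "card {s,t} \<le> card (T \<inter> C)" using assms(6) by (intro card_mono) auto
  with \<open>s \<noteq> t\<close> show ?thesis by auto
qed

definition VC :: "nat set" where "VC = {0,1,2,3}"
definition EC :: "nat set set" where "EC = {{0,1},{0,2},{0,3}}"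

lemma part3a: "exactly_hittable_interval_graph VC EC"
proof -
  have sg: "simple_graph VC EC" unfolding VC_def EC_def by (rule sg_intro) simp_all
  define l :: "nat \<Rightarrow> real" where "l v = [2,1,3,4] ! v" for v
  define r :: "nat \<Rightarrow> real" where "r v = [4,2,3,5] ! v" for v
  have "interval_graph VC EC" unfolding interval_graph_def
    apply (rule conjI[OF sg])
    apply (rule exI[of _ l], rule exI[of _ r])
    unfolding is_intersection_graph_def VC_def EC_def l_def r_def
    by (simp add: doubleton_eq_iff)
  moreover define I :: "nat \<Rightarrow> nat set" where "I v = {[2,1,3,4] ! v..[4,2,3,5] ! v}" for v
  have "interval_hypergraph 5 VC I" unfolding interval_hypergraph_def VC_def I_def by auto
  moreover have "exactly_hittable 5 VC I" unfolding exactly_hittable_def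
  proof (intro exI[of _ "{1,3,5}"] conjI)
    have "{1::nat,3,5} \<inter> {2..4} = {3}" by auto
    moreover have "{1::nat,3,5} \<inter> {1..2} = {1}" by auto
    moreover have "{1::nat,3,5} \<inter> {3..3} = {3}" by auto
    moreover have "{1::nat,3,5} \<inter> {4..5} = {5}" by auto
    ultimately show "\<forall>v\<in>VC. card ({1, 3, 5} \<inter> I v) = 1" unfolding VC_def I_def by auto
  qed auto
  moreover have "is_intersection_graph VC EC I"
    unfolding is_intersection_graph_def VC_def EC_def I_def
    by (simp add: doubleton_eq_iff)
  ultimately show ?thesis unfolding exactly_hittable_interval_graph_def by blast
qed

lemma part3b: "\<not> proper_interval_graph VC EC"
proof
  assume "proper_interval_graph VC EC"
  then obtain a b :: "nat\<Rightarrow>real" where N: "\<forall>v\<in>VC. a v \<le> b v"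
    and ig: "is_intersection_graph VC EC (\<lambda>v. {a v..b v})"
    and pr: "\<forall>u\<in>VC. \<forall>v\<in>VC. \<not> {a u..b u} \<subset> {a v..b v}"
    unfolding proper_interval_graph_def by blast
  have N': "a v \<le> b v" if "v \<in> {0,1,2,3}" for v using N that VC_def by auto
  have M: "a x \<le> b 0 \<and> a 0 \<le> b x" if "x \<in> {1,2,3}" for x
  proof -
    have "{0,x} \<in> EC" using that EC_def by auto
    moreover have "0 \<in> VC" "x \<in> VC" "(0::nat) \<noteq> x" using that VC_def by auto
    ultimately have "{a 0..b 0} \<inter> {a x..b x} \<noteq> {}" using ig unfolding is_intersection_graph_def by blast
    moreover have "a 0 \<le> b 0" "a x \<le> b x" using N' that by auto
    ultimately show ?thesis using ivl_disj not_le by metis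
  qed
  have D: "b x < a y \<or> b y < a x" if "x \<in> {1,2,3}" "y \<in> {1,2,3}" "x \<noteq> y" for x y
  proof -
    have all0: "\<forall>e\<in>EC. (0::nat) \<in> e" unfolding EC_def by simp
    have n0: "(0::nat) \<notin> {x,y}" using that by auto
    have "{x,y} \<notin> EC"
    proof
      assume "{x,y} \<in> EC"
      from bspec[OF all0 this] n0 show False by simp
    qed
    moreover have "x \<in> VC" "y \<in> VC" using that VC_def by auto
    ultimately have "{a x..b x} \<inter> {a y..b y} = {}" using ig that(3) unfolding is_intersection_graph_def by blast
    moreover have "a y \<le> b y" "a x \<le> b x" using N' that by auto
    ultimately show ?thesis using ivl_disj by metis
  qed
  obtain w where w: "w \<in> {1,2,3}" "a 0 \<le> a w" "b w \<le> b 0"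
  proof -
    have "\<exists>w\<in>{1,2,3}. a 0 \<le> a w \<and> b w \<le> b 0"
      using mid[OF N'[of 1, simplified] N'[of 2, simplified] N'[of 3, simplified] D[of 1 2, simplified] D[of 1 3, simplified] D[of 2 3, simplified] M[of 1, simplified, THEN conjunct1] M[of 1, simplified, THEN conjunct2] M[of 2, simplified, THEN conjunct1] M[of 2, simplified, THEN conjunct2] M[of 3, simplified, THEN conjunct1] M[of 3, simplified, THEN conjunct2]] by (simp only: One_nat_def)
    then show ?thesis using that by blast
  qed
  define y :: nat where "y = (if w = 1 then 2 else 1)"
  have y: "y \<in> {1,2,3}" "y \<noteq> w" unfolding y_def by auto
  have s: "{a w..b w} \<subseteq> {a 0..b 0}" using w by auto
  have "{a w..b w} \<noteq> {a 0..b 0}"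
  proof
    assume "{a w..b w} = {a 0..b 0}"
    moreover have "a w \<le> b w" using N' w(1) by auto
    moreover have "a 0 \<le> b 0" using N' by simp
    ultimately have e: "a w = a 0" "b w = b 0" by (simp_all add: Icc_eq_Icc)
    have "b w < a y \<or> b y < a w" by (rule D[OF w(1) y(1) y(2)[symmetric]])
    moreover have "a y \<le> b 0 \<and> a 0 \<le> b y" by (rule M[OF y(1)])
    ultimately show False using e by linarith
  qed
  hence "{a w..b w} \<subset> {a 0..b 0}" using s by blast
  moreover have "w \<in> VC" "0 \<in> VC" using w(1) unfolding VC_def by auto
  ultimately show False using pr by blast
qed

definition VS :: "nat set" where "VS = {0,1,2,3,4}"
definition ES :: "nat set set" where "ES = {{0,1},{0,2},{0,3},{0,4}}"

lemma part4a: "interval_graph VS ES"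
proof -
  have sg: "simple_graph VS ES" unfolding VS_def ES_def by (rule sg_intro) simp_all
  define l :: "nat \<Rightarrow> real" where "l v = [0,1,3,5,7] ! v" for v
  define r :: "nat \<Rightarrow> real" where "r v = [10,1,3,5,7] ! v" for v
  show ?thesis unfolding interval_graph_def
    apply (rule conjI[OF sg])
    apply (rule exI[of _ l], rule exI[of _ r])
    unfolding is_intersection_graph_def VS_def ES_def l_def r_def
    by (simp add: doubleton_eq_iff)
qed

lemma part4b: "\<not> exactly_hittable_interval_graph VS ES"
proof
  assume "exactly_hittable_interval_graph VS ES"
  then obtain n I where ih: "interval_hypergraph n VS I" and eh: "exactly_hittable n VS I"
    and ig: "is_intersection_graph VS ES I"
    unfolding exactly_hittable_interval_graph_def by blast
  from ih have "\<forall>v\<in>VS. \<exists>a b. 1 \<le> a \<and> a \<le> b \<and> b \<le> n \<and> I v = {a..b}"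
    unfolding interval_hypergraph_def by blast
  then obtain a b where ab: "\<forall>v\<in>VS. 1 \<le> a v \<and> a v \<le> b v \<and> b v \<le> n \<and> I v = {a v..b v}"
    by metis
  obtain T where T: "\<forall>v\<in>VS. card (T \<inter> I v) = 1" using eh unfolding exactly_hittable_def by blast
  have N': "a v \<le> b v" "I v = {a v..b v}" if "v \<in> {0,1,2,3,4}" for v using ab that VS_def by auto
  have M: "a x \<le> b 0 \<and> a 0 \<le> b x" if "x \<in> {1,2,3,4}" for x
  proof -
    have "{0,x} \<in> ES" using that ES_def by auto
    moreover have "0 \<in> VS" "x \<in> VS" "(0::nat) \<noteq> x" using that VS_def by auto
    ultimately have "I 0 \<inter> I x \<noteq> {}" using ig unfolding is_intersection_graph_def by blast
    moreover have "I 0 = {a 0..b 0}" "I x = {a x..b x}" "a 0 \<le> b 0" "a x \<le> b x" using N' that by auto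
    ultimately show ?thesis using ivl_disj not_le by metis
  qed
  have D: "b x < a y \<or> b y < a x" if "x \<in> {1,2,3,4}" "y \<in> {1,2,3,4}" "x \<noteq> y" for x y
  proof -
    have all0: "\<forall>e\<in>ES. (0::nat) \<in> e" unfolding ES_def by simp
    have n0: "(0::nat) \<notin> {x,y}" using that by auto
    have "{x,y} \<notin> ES"
    proof
      assume "{x,y} \<in> ES"
      from bspec[OF all0 this] n0 show False by simp
    qed
    moreover have "x \<in> VS" "y \<in> VS" using that VS_def by auto
    ultimately have "I x \<inter> I y = {}" using ig that(3) unfolding is_intersection_graph_def by blast
    moreover have "I x = {a x..b x}" "I y = {a y..b y}" "a y \<le> b y" "a x \<le> b x" using N' that by auto
    ultimately show ?thesis using ivl_disj by metis
  qed
  obtain i where i: "i \<in> {1,2,3}" "a 0 \<le> a i" "b i \<le> b 0"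
  proof -
    have "\<exists>w\<in>{1,2,3}. a 0 \<le> a w \<and> b w \<le> b 0"
      using mid[OF N'(1)[of 1, simplified] N'(1)[of 2, simplified] N'(1)[of 3, simplified] D[of 1 2, simplified] D[of 1 3, simplified] D[of 2 3, simplified] M[of 1, simplified, THEN conjunct1] M[of 1, simplified, THEN conjunct2] M[of 2, simplified, THEN conjunct1] M[of 2, simplified, THEN conjunct2] M[of 3, simplified, THEN conjunct1] M[of 3, simplified, THEN conjunct2]] by (simp only: One_nat_def)
    then show ?thesis using that by blast
  qed
  obtain j where j: "j \<in> {1,2,3,4}" "j \<noteq> i" "a 0 \<le> a j" "b j \<le> b 0"
  proof -
    have "\<exists>j\<in>{1,2,3,4}. j \<noteq> i \<and> a 0 \<le> a j \<and> b j \<le> b 0"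
    proof -
      consider "i = 1" | "i = 2" | "i = 3" using i(1) by auto
      then show ?thesis
      proof cases
        case 1
        have "\<exists>w\<in>{2,3,4}. a 0 \<le> a w \<and> b w \<le> b 0"
          using mid[OF N'(1)[of 2, simplified] N'(1)[of 3, simplified] N'(1)[of 4, simplified] D[of 2 3, simplified] D[of 2 4, simplified] D[of 3 4, simplified] M[of 2, simplified, THEN conjunct1] M[of 2, simplified, THEN conjunct2] M[of 3, simplified, THEN conjunct1] M[of 3, simplified, THEN conjunct2] M[of 4, simplified, THEN conjunct1] M[of 4, simplified, THEN conjunct2]] by (simp only: One_nat_def)
        then show ?thesis using 1 by auto
      next
        case 2
        have "\<exists>w\<in>{1,3,4}. a 0 \<le> a w \<and> b w \<le> b 0"
          using mid[OF N'(1)[of 1, simplified] N'(1)[of 3, simplified] N'(1)[of 4, simplified] D[of 1 3, simplified] D[of 1 4, simplified] D[of 3 4, simplified] M[of 1, simplified, THEN conjunct1] M[of 1, simplified, THEN conjunct2] M[of 3, simplified, THEN conjunct1] M[of 3, simplified, THEN conjunct2] M[of 4, simplified, THEN conjunct1] M[of 4, simplified, THEN conjunct2]] by (simp only: One_nat_def)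
        then show ?thesis using 2 by auto
      next
        case 3
        have "\<exists>w\<in>{1,2,4}. a 0 \<le> a w \<and> b w \<le> b 0"
          using mid[OF N'(1)[of 1, simplified] N'(1)[of 2, simplified] N'(1)[of 4, simplified] D[of 1 2, simplified] D[of 1 4, simplified] D[of 2 4, simplified] M[of 1, simplified, THEN conjunct1] M[of 1, simplified, THEN conjunct2] M[of 2, simplified, THEN conjunct1] M[of 2, simplified, THEN conjunct2] M[of 4, simplified, THEN conjunct1] M[of 4, simplified, THEN conjunct2]] by (simp only: One_nat_def)
        then show ?thesis using 3 by auto
      qed
    qed
    then show ?thesis using that by blast
  qed
  have iV: "i \<in> VS" "j \<in> VS" "0 \<in> VS" using i(1) j(1) VS_def by auto
  have "card (T \<inter> I 0) \<noteq> 1"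
  proof (rule two_in[of T "I i" "I j"])
    show "card (T \<inter> I i) = 1" using bspec[OF T iV(1)] .
    show "card (T \<inter> I j) = 1" using bspec[OF T iV(2)] .
    have "b i < a j \<or> b j < a i" using D i(1) j(1,2) by auto
    moreover have Ii: "I i = {a i..b i}" "I j = {a j..b j}" "a i \<le> b i" "a j \<le> b j" using N' i(1) j(1) by auto
    ultimately show "I i \<inter> I j = {}" using ivl_disj by metis
    have I0: "I 0 = {a 0..b 0}" using N'(2)[of 0] by simp
    show "I i \<subseteq> I 0" using Ii(1) I0 i(2,3) by (simp add: subset_iff)
    show "I j \<subseteq> I 0" using Ii(2) I0 j(3,4) by (simp add: subset_iff)
    show "finite (I 0)" using I0 by simp
  qed
  moreover have "card (T \<inter> I 0) = 1" using bspec[OF T iV(3)] .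
  ultimately show False by contradiction
qed

theorem theorem6:
  shows "(\<forall>(V :: 'a set) E. proper_interval_graph V E \<longrightarrow> exactly_hittable_interval_graph V E)
       \<and> (\<forall>(V :: 'a set) E. exactly_hittable_interval_graph V E \<longrightarrow> interval_graph V E)
       \<and> (\<exists>(V :: nat set) E. exactly_hittable_interval_graph V E \<and> \<not> proper_interval_graph V E)
       \<and> (\<exists>(V :: nat set) E. interval_graph V E \<and> \<not> exactly_hittable_interval_graph V E)"
proof -
  have A: "\<forall>(V :: 'a set) E. proper_interval_graph V E \<longrightarrow> exactly_hittable_interval_graph V E"
    by (intro allI impI) (rule part1)
  have B: "\<forall>(V :: 'a set) E. exactly_hittable_interval_graph V E \<longrightarrow> interval_graph V E"
    unfolding exactly_hittable_interval_graph_def by simp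
  have C: "\<exists>(V :: nat set) E. exactly_hittable_interval_graph V E \<and> \<not> proper_interval_graph V E"
    using part3a part3b by (intro exI[of _ VC] exI[of _ EC] conjI)
  have D: "\<exists>(V :: nat set) E. interval_graph V E \<and> \<not> exactly_hittable_interval_graph V E"
    using part4a part4b by (intro exI[of _ VS] exI[of _ ES] conjI)
  show ?thesis using A B C D by (intro conjI) assumption+
qed

end
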